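(* The group $\mathrm{GO}(S)^\circ$ acts freely on $\tau^{-1}(CZ_{r,n} \cup CZ_{r-1,n}) \subset \mathrm{Hom}(V,S)$.
   Context: Work over $\mathbb{C}$. Let $V = \mathbb{C}^n$, $r \le n$ even, $S = \mathbb{C}^r$ with a nondegenerate quadratic form $\omega_S$. $\mathrm{GO}(S)$ is the group of invertible linear $\phi: S\to S$ with $\omega_S(\phi v,\phi v) = \chi(\phi)\omega_S(v,v)$ for some $\chi(\phi)\in\mathbb{C}^*$. $\mathrm{GO}(S)$ acts on the orthogonal Grassmannian $\mathrm{OG}(r/2,S)$ of maximal isotropic subspaces, which has two connected components; $\mathrm{GO}(S)^\circ$ is the kernel of the induced homomorphism $\mathrm{GO}(S) \to \mu_2$. $\mathrm{GO}(S)$ acts on $\mathrm{Hom}(V,S)$ by $(\phi,f)\mapsto \phi\circ f$. Let $\tau: \mathrm{Hom}(V,S) \to \mathrm{Sym}^2 V^\vee$, $\tau(f)(v,w) = \omega_S(f(v),f(w))$. $CZ_{k,n} \subset \mathrm{Sym}^2 V^\vee$ is the set of quadratic forms of rank exactly $k$. *)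

theory Defs
  imports "HOL-Analysis.Analysis"
begin

text \<open>S = complex^'r with the symmetric bilinear form attached to a symmetric
  matrix Q; V = complex^'n; Hom(V,S) = r x n matrices acting by (*v).\<close>

definition omega :: "complex^'r^'r \<Rightarrow> complex^'r \<Rightarrow> complex^'r \<Rightarrow> complex" where
  "omega Q v w = (\<Sum>i\<in>UNIV. v $ i * (Q *v w) $ i)"

definition nondeg_form :: "complex^'r^'r \<Rightarrow> bool" where
  "nondeg_form Q \<longleftrightarrow> transpose Q = Q \<and> invertible Q"

definition GO :: "complex^'r^'r \<Rightarrow> (complex^'r^'r) set" where
  "GO Q = {phi. invertible phi \<and>
     (\<exists>c. c \<noteq> 0 \<and> (\<forall>v. omega Q (phi *v v) (phi *v v) = c * omega Q v v))}"

text \<open>Points of OG(r/2, S): maximal isotropic (complex) subspaces.\<close>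
definition max_isotropic :: "complex^'r^'r \<Rightarrow> (complex^'r) set \<Rightarrow> bool" where
  "max_isotropic Q L \<longleftrightarrow> vec.subspace L \<and> (\<forall>x\<in>L. \<forall>y\<in>L. omega Q x y = 0)
     \<and> 2 * vec.dim L = CARD('r)"

text \<open>Two maximal isotropic subspaces lie in the same connected component of
  OG(r/2,S) iff dim (L \<inter> L') \<equiv> r/2 (mod 2).\<close>
definition same_component :: "(complex^'r) set \<Rightarrow> (complex^'r) set \<Rightarrow> bool" where
  "same_component L L' \<longleftrightarrow> even (vec.dim (L \<inter> L') + CARD('r) div 2)"

text \<open>GO(S)^o: elements of GO(S) mapping every point of OG(r/2,S) into its own component.\<close>
definition GO0 :: "complex^'r^'r \<Rightarrow> (complex^'r^'r) set" where
  "GO0 Q = {phi \<in> GO Q. \<forall>L. max_isotropic Q L \<longrightarrow>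
              same_component L ((\<lambda>v. phi *v v) ` L)}"

text \<open>tau(f)(v,w) = omega(f v, f w), as the Gram matrix f^T Q f.\<close>
definition tau :: "complex^'r^'r \<Rightarrow> complex^'n^'r \<Rightarrow> complex^'n^'n" where
  "tau Q F = transpose F ** Q ** F"

definition CZ :: "nat \<Rightarrow> (complex^'n^'n) set" where
  "CZ k = {A. transpose A = A \<and> rank A = k}"

end

theory Submission
  imports Defs
begin


lemma omega_expand: "omega Q v w = (\<Sum>i\<in>UNIV. \<Sum>j\<in>UNIV. v$i * Q$i$j * w$j)"
  unfolding omega_def matrix_vector_mult_def by (simp add: sum_distrib_left mult.assoc)

lemma omega_add_left: "omega Q (v + v') w = omega Q v w + omega Q v' w"
  unfolding omega_def by (simp add: distrib_right sum.distrib)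
lemma omega_add_right: "omega Q w (v + v') = omega Q w v + omega Q w v'"
  unfolding omega_def by (simp add: vec.add distrib_left sum.distrib)
lemma omega_scale_left: "omega Q (c *s v) w = c * omega Q v w"
  unfolding omega_def by (simp add: sum_distrib_left mult.assoc)
lemma omega_scale_right: "omega Q w (c *s v) = c * omega Q w v"
  unfolding omega_def by (simp add: vec.scale sum_distrib_left mult.left_commute)
lemma omega_diff_left: "omega Q (v - v') w = omega Q v w - omega Q v' w"
  unfolding omega_def by (simp add: left_diff_distrib sum_subtractf)
lemma omega_diff_right: "omega Q w (v - v') = omega Q w v - omega Q w v'"
  unfolding omega_def by (simp add: vec.diff right_diff_distrib sum_subtractf)
lemma omega_zero_left[simp]: "omega Q 0 w = 0"
  unfolding omega_def by simp
lemma omega_zero_right[simp]: "omega Q w 0 = 0"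
  unfolding omega_def by simp

lemma omega_sym: assumes "transpose Q = Q" shows "omega Q v w = omega Q w v"
proof -
  have q: "Q$i$j = Q$j$i" for i j using assms by (metis transpose_def vec_lambda_beta)
  show ?thesis unfolding omega_expand
    by (subst sum.swap) (simp add: q mult.commute mult.left_commute)
qed

lemma omega_gram: "(transpose M ** Q ** M)$i$j = omega Q (column i M) (column j M)"
proof -
  have "(transpose M ** Q ** M)$i$j = (\<Sum>k\<in>UNIV. (\<Sum>l\<in>UNIV. M$l$i * Q$l$k) * M$k$j)"
    by (simp add: matrix_matrix_mult_def transpose_def)
  also have "\<dots> = (\<Sum>l\<in>UNIV. \<Sum>k\<in>UNIV. M$l$i * Q$l$k * M$k$j)"
    by (simp add: sum_distrib_right, subst sum.swap, simp)
  finally show ?thesis unfolding omega_expand by (simp add: column_def)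
qed



definition ndg :: "complex^'r^'r \<Rightarrow> (complex^'r) set \<Rightarrow> bool" where
  "ndg Q U \<longleftrightarrow> (\<forall>z\<in>U. (\<forall>w\<in>U. omega Q z w = 0) \<longrightarrow> z = 0)"
definition iso :: "complex^'r^'r \<Rightarrow> (complex^'r) set \<Rightarrow> bool" where
  "iso Q L \<longleftrightarrow> (\<forall>x\<in>L. \<forall>y\<in>L. omega Q x y = 0)"

lemmas omega_simps = omega_add_left omega_add_right omega_scale_left omega_scale_right
  omega_diff_left omega_diff_right

lemma omega_square:
  assumes sym: "transpose Q = Q"
  shows "omega Q (v + w) (v + w) = omega Q v v + 2 * omega Q v w + omega Q w w"
  using omega_sym[OF sym, of w v] by (simp add: omega_simps)

lemma exists_aniso:
  assumes sym: "transpose Q = Q" and U: "vec.subspace U" and nd: "ndg Q U" and ne: "U \<noteq> {0}"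
  shows "\<exists>b\<in>U. omega Q b b \<noteq> 0"
proof (rule ccontr)
  assume "\<not> ?thesis"
  hence all: "\<forall>b\<in>U. omega Q b b = 0" by blast
  obtain z where z: "z \<in> U" "z \<noteq> 0" using ne U vec.subspace_0 by blast
  then obtain w where w: "w \<in> U" "omega Q z w \<noteq> 0" using nd unfolding ndg_def by blast
  have "z + w \<in> U" using U z w by (simp add: vec.subspace_add)
  hence "omega Q (z+w) (z+w) = 0" using all by blast
  hence "2 * omega Q z w = 0" using omega_square[OF sym, of z w] all z w by simp
  thus False using w by simp
qed

lemma step1:
  assumes sym: "transpose Q = Q" and U: "vec.subspace U" and nd: "ndg Q U"
    and b: "b \<in> U" "omega Q b b \<noteq> 0"
  defines "U' \<equiv> {z\<in>U. omega Q z b = 0}"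
  shows "vec.subspace U'" "ndg Q U'" "U' \<subseteq> U" "vec.span (insert b U') = U"
    "vec.dim U = vec.dim U' + 1" "b \<notin> U'"
proof -
  show sub: "vec.subspace U'" unfolding U'_def vec.subspace_def using U
    by (auto simp: vec.subspace_def omega_simps)
  show "U' \<subseteq> U" unfolding U'_def by auto
  show bn: "b \<notin> U'" unfolding U'_def using b by auto
  have dec: "z - (omega Q z b / omega Q b b) *s b \<in> U'" if "z \<in> U" for z
    unfolding U'_def using that b U by (auto simp: omega_simps vec.subspace_diff vec.subspace_scale)
  show "ndg Q U'" unfolding ndg_def
  proof (intro ballI impI)
    fix z assume z: "z \<in> U'" and h: "\<forall>w\<in>U'. omega Q z w = 0"
    have "\<forall>w\<in>U. omega Q z w = 0"
    proof
      fix w assume w: "w \<in> U"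
      let ?k = "omega Q w b / omega Q b b"
      have "omega Q z (w - ?k *s b) = 0" using h dec[OF w] by blast
      moreover have "omega Q z b = 0" using z unfolding U'_def by auto
      ultimately show "omega Q z w = 0" by (simp add: omega_simps)
    qed
    thus "z = 0" using nd z unfolding ndg_def U'_def by auto
  qed
  have spU': "vec.span U' = U'" using sub vec.span_eq_iff by blast
  show sp: "vec.span (insert b U') = U"
  proof
    show "vec.span (insert b U') \<subseteq> U"
      using U b \<open>U' \<subseteq> U\<close> by (intro vec.span_minimal) auto
    show "U \<subseteq> vec.span (insert b U')"
    proof
      fix z assume "z \<in> U"
      then have "z - (omega Q z b / omega Q b b) *s b \<in> vec.span U'" using dec vec.span_superset by blast
      thus "z \<in> vec.span (insert b U')" using vec.span_breakdown_eq by blast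
    qed
  qed
  have nb: "b \<notin> vec.span U'" using bn spU' by metis
  have "vec.dim (insert b U') = vec.dim U' + 1" using vec.dim_insert[of b U'] nb by simp
  thus "vec.dim U = vec.dim U' + 1" by (metis sp vec.dim_span)
qed



lemma sub_ne0: assumes "vec.subspace U" "vec.dim U \<ge> 1" shows "U \<noteq> {0}"
  using assms by auto

lemma iso_exists:
  assumes sym: "transpose Q = Q" and U: "vec.subspace U" and nd: "ndg Q U"
    and a: "a \<in> U" "omega Q a a \<noteq> 0" and d: "vec.dim U \<ge> 2"
  shows "\<exists>x\<in>U. omega Q x x = 0 \<and> omega Q x a \<noteq> 0"
proof -
  define U1 where "U1 = {z\<in>U. omega Q z a = 0}"
  note s = step1[OF sym U nd a, folded U1_def]
  have "vec.dim U1 \<ge> 1" using s(5) d by simp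
  hence "U1 \<noteq> {0}" using s(1) sub_ne0 by blast
  then obtain w where w: "w \<in> U1" "omega Q w w \<noteq> 0" using exists_aniso[OF sym s(1) s(2)] by blast
  have wa: "omega Q w a = 0" "omega Q a w = 0" using w(1) omega_sym[OF sym, of a w] unfolding U1_def by auto
  define t where "t = csqrt (- omega Q w w / omega Q a a)"
  have t2: "t * t = - omega Q w w / omega Q a a" unfolding t_def by (metis power2_csqrt power2_eq_square)
  have tne: "t \<noteq> 0" using t2 w(2) a(2) by auto
  define x where "x = w + t *s a"
  have xU: "x \<in> U" unfolding x_def using w(1) s(3) U a by (auto simp: vec.subspace_add vec.subspace_scale)
  have "omega Q x x = omega Q w w + t * t * omega Q a a"
    unfolding x_def by (simp add: omega_simps wa algebra_simps)
  also have "\<dots> = 0" using t2 a(2) by simp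
  finally have "omega Q x x = 0" .
  moreover have "omega Q x a = t * omega Q a a" unfolding x_def by (simp add: omega_simps wa)
  ultimately show ?thesis using xU tne a(2) by auto
qed

lemma hyp_step:
  assumes sym: "transpose Q = Q" and U: "vec.subspace U" and nd: "ndg Q U"
    and a: "a \<in> U" "omega Q a a \<noteq> 0" and x: "x \<in> U" "omega Q x x = 0" "omega Q x a \<noteq> 0"
  shows "\<exists>U2. vec.subspace U2 \<and> ndg Q U2 \<and> U2 \<subseteq> U \<and> (\<forall>z\<in>U2. omega Q z a = 0 \<and> omega Q z x = 0)
     \<and> vec.dim U2 + 2 = vec.dim U"
proof -
  define U1 where "U1 = {z\<in>U. omega Q z a = 0}"
  note s = step1[OF sym U nd a, folded U1_def]
  define k where "k = omega Q x a / omega Q a a"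
  define x' where "x' = x - k *s a"
  have kne: "k \<noteq> 0" unfolding k_def using a x by simp
  have xa: "omega Q a x = omega Q x a" using omega_sym[OF sym] by blast
  have kk: "k * omega Q a a = omega Q x a" unfolding k_def using a by simp
  have x'U1: "x' \<in> U1" unfolding U1_def x'_def using x a U kk
    by (auto simp: omega_simps vec.subspace_diff vec.subspace_scale)
  have "omega Q x' x' = omega Q x x - 2 * k * omega Q x a + k * (k * omega Q a a)"
    unfolding x'_def by (simp add: omega_simps xa algebra_simps)
  also have "\<dots> = - k * omega Q x a" using x(2) kk by (simp add: algebra_simps)
  finally have x'x': "omega Q x' x' \<noteq> 0" using kne x(3) by simp
  define U2 where "U2 = {z\<in>U1. omega Q z x' = 0}"
  note s2 = step1[OF sym s(1) s(2) x'U1 x'x', folded U2_def]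
  show ?thesis
  proof (intro exI conjI)
    show "vec.subspace U2" "ndg Q U2" by (fact s2(1), fact s2(2))
    show "U2 \<subseteq> U" using s2(3) s(3) by blast
    show "\<forall>z\<in>U2. omega Q z a = 0 \<and> omega Q z x = 0"
    proof
      fix z assume z: "z \<in> U2"
      hence za: "omega Q z a = 0" and zx': "omega Q z x' = 0" unfolding U2_def U1_def by auto
      have "omega Q z x = omega Q z x' + k * omega Q z a" unfolding x'_def by (simp add: omega_simps)
      thus "omega Q z a = 0 \<and> omega Q z x = 0" using za zx' by simp
    qed
    show "vec.dim U2 + 2 = vec.dim U" using s(5) s2(5) by simp
  qed
qed

lemma extend:
  assumes sym: "transpose Q = Q" and L: "vec.subspace L" "iso Q L"
    and lx: "\<forall>l\<in>L. omega Q l x = 0" and xx: "omega Q x x = 0" and xn: "x \<notin> L"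
  shows "vec.subspace (vec.span (insert x L))" "iso Q (vec.span (insert x L))"
    "vec.dim (vec.span (insert x L)) = vec.dim L + 1"
proof -
  show "vec.subspace (vec.span (insert x L))" by (rule vec.subspace_span)
  have spL: "vec.span L = L" using L(1) vec.span_eq_iff by blast
  have mem: "\<exists>k. y - k *s x \<in> L" if "y \<in> vec.span (insert x L)" for y
    using that vec.span_breakdown_eq spL by metis
  show "iso Q (vec.span (insert x L))" unfolding iso_def
  proof (intro ballI)
    fix y z assume y: "y \<in> vec.span (insert x L)" and z: "z \<in> vec.span (insert x L)"
    obtain s where ys: "y - s *s x \<in> L" using mem[OF y] by blast
    obtain t where zt: "z - t *s x \<in> L" using mem[OF z] by blast
    define y' where "y' = y - s *s x"
    define z' where "z' = z - t *s x"
    have yy: "y = y' + s *s x" and zz: "z = z' + t *s x" unfolding y'_def z'_def by simp_all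
    have "omega Q y' z' = 0" using L(2) ys zt unfolding iso_def y'_def z'_def by blast
    moreover have "omega Q y' x = 0" "omega Q z' x = 0" using lx ys zt unfolding y'_def z'_def by auto
    moreover have "omega Q x z' = 0" using \<open>omega Q z' x = 0\<close> omega_sym[OF sym] by metis
    ultimately show "omega Q y z = 0" unfolding yy zz by (simp add: omega_simps xx)
  qed
  have nb: "x \<notin> vec.span L" using xn spL by metis
  show "vec.dim (vec.span (insert x L)) = vec.dim L + 1"
    using vec.dim_insert[of x L] nb by simp
qed

lemma iso_half:
  assumes sym: "transpose Q = Q"
  shows "vec.subspace U \<Longrightarrow> ndg Q U \<Longrightarrow> \<exists>L. vec.subspace L \<and> L \<subseteq> U \<and> iso Q L \<and>
     (2 * vec.dim L = vec.dim U \<or> 2 * vec.dim L + 1 = vec.dim U)"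
proof (induction "vec.dim U" arbitrary: U rule: less_induct)
  case less
  show ?case
  proof (cases "vec.dim U \<le> 1")
    case True
    have "vec.subspace {0::complex^'a}" by (simp add: vec.subspace_def)
    moreover have "{0} \<subseteq> U" using less.prems(1) vec.subspace_0 by blast
    moreover have "iso Q {0}" unfolding iso_def by simp
    moreover have d0: "vec.dim {0::complex^'a} = 0" by simp
    moreover have "2 * vec.dim {0::complex^'a} = vec.dim U \<or> 2 * vec.dim {0::complex^'a} + 1 = vec.dim U"
      unfolding d0 using True by presburger
    ultimately show ?thesis by blast
  next
    case False
    hence d: "vec.dim U \<ge> 2" by simp
    have "U \<noteq> {0}" using d sub_ne0[OF less.prems(1)] by simp
    then obtain a where a: "a \<in> U" "omega Q a a \<noteq> 0" using exists_aniso[OF sym less.prems] by blast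
    obtain x where x: "x \<in> U" "omega Q x x = 0" "omega Q x a \<noteq> 0"
      using iso_exists[OF sym less.prems a d] by blast
    obtain U2 where U2: "vec.subspace U2" "ndg Q U2" "U2 \<subseteq> U"
      "\<forall>z\<in>U2. omega Q z a = 0 \<and> omega Q z x = 0" "vec.dim U2 + 2 = vec.dim U"
      using hyp_step[OF sym less.prems a x] by blast
    obtain L' where L': "vec.subspace L'" "L' \<subseteq> U2" "iso Q L'"
       "2 * vec.dim L' = vec.dim U2 \<or> 2 * vec.dim L' + 1 = vec.dim U2"
      using less.hyps[of U2] U2 by auto
    have xn: "x \<notin> L'" using L'(2) U2(4) x(3) by blast
    have lx: "\<forall>l\<in>L'. omega Q l x = 0" using L'(2) U2(4) by blast
    note e = extend[OF sym L'(1) L'(3) lx x(2) xn]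
    have "vec.span (insert x L') \<subseteq> U"
      using less.prems(1) x(1) L'(2) U2(3) by (intro vec.span_minimal) auto
    thus ?thesis using e L'(4) U2(5) by (intro exI[of _ "vec.span (insert x L')"]) auto
  qed
qed

lemma proj:
  assumes sym: "transpose Q = Q"
  shows "vec.subspace W \<Longrightarrow> ndg Q W \<Longrightarrow> \<exists>p\<in>W. \<forall>w\<in>W. omega Q (a - p) w = 0"
proof (induction "vec.dim W" arbitrary: W a rule: less_induct)
  case less
  show ?case
  proof (cases "W = {0}")
    case True thus ?thesis by auto
  next
    case False
    then obtain b where b: "b \<in> W" "omega Q b b \<noteq> 0" using exists_aniso[OF sym less.prems] by blast
    define W' where "W' = {z\<in>W. omega Q z b = 0}"
    note s = step1[OF sym less.prems b, folded W'_def]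
    define k where "k = omega Q a b / omega Q b b"
    obtain p' where p': "p' \<in> W'" "\<forall>w\<in>W'. omega Q (a - k *s b - p') w = 0"
      using less.hyps[of W' "a - k *s b"] s by auto
    have p'b: "omega Q p' b = 0" using p'(1) unfolding W'_def by auto
    have kk: "k * omega Q b b = omega Q a b" unfolding k_def using b by simp
    show ?thesis
    proof (intro bexI ballI)
      show "p' + k *s b \<in> W" using p'(1) s(3) b less.prems(1)
        by (auto simp: vec.subspace_add vec.subspace_scale)
      fix w assume "w \<in> W"
      hence "w \<in> vec.span (insert b W')" using s(4) by simp
      then obtain t where t: "w - t *s b \<in> vec.span W'" using vec.span_breakdown_eq by blast
      hence tW: "w - t *s b \<in> W'" using s(1) vec.span_eq_iff by blast
      define w' where "w' = w - t *s b"
      have ww: "w = w' + t *s b" unfolding w'_def by simp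
      have "omega Q (a - k *s b - p') w' = 0" using p'(2) tW unfolding w'_def by blast
      moreover have "omega Q (a - k *s b - p') b = 0" using p'b kk by (simp add: omega_simps)
      moreover have "omega Q (a - k *s b - p') (w' + t *s b) = omega Q (a - k *s b - p') w' + t * omega Q (a - k *s b - p') b"
        by (simp only: omega_add_right omega_scale_right)
      moreover have eq: "a - (p' + k *s b) = a - k *s b - p'" by (simp add: algebra_simps)
      ultimately show "omega Q (a - (p' + k *s b)) w = 0" unfolding ww eq by simp
    qed
  qed
qed



lemma col_axis: "M *v axis j 1 = column j M"
  by (simp add: vec_eq_iff matrix_vector_mult_def axis_def column_def mult.commute if_distrib cong: if_cong)

lemma omega_axis: assumes sym: "transpose Q = Q" shows "omega Q z (axis j 1) = (Q *v z) $ j"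
proof -
  have q: "Q$i$j = Q$j$i" for i j using sym by (metis transpose_def vec_lambda_beta)
  show ?thesis unfolding omega_def col_axis by (simp add: column_def matrix_vector_mult_def q mult.commute)
qed

lemma univ_ndg: assumes nf: "nondeg_form Q" shows "ndg Q UNIV"
  unfolding ndg_def
proof (intro ballI impI)
  fix z assume h: "\<forall>w\<in>UNIV. omega Q z w = 0"
  have sym: "transpose Q = Q" and inv: "invertible Q" using nf unfolding nondeg_form_def by auto
  have "Q *v z = 0" using h omega_axis[OF sym] by (simp add: vec_eq_iff) (metis h omega_axis[OF sym] UNIV_I)
  obtain Q' where "Q' ** Q = mat 1" using inv unfolding invertible_def by blast
  hence "z = Q' *v (Q *v z)" by (simp add: matrix_vector_mul_assoc)
  thus "z = 0" using \<open>Q *v z = 0\<close> by simp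
qed

lemma polar:
  assumes sym: "transpose Q = Q" and h: "\<forall>v. omega Q (phi *v v) (phi *v v) = c * omega Q v v"
  shows "omega Q (phi *v v) (phi *v w) = c * omega Q v w"
proof -
  have "omega Q (phi *v (v + w)) (phi *v (v + w)) = c * omega Q (v + w) (v + w)" using h by blast
  hence "omega Q (phi *v v) (phi *v v) + 2 * omega Q (phi *v v) (phi *v w) + omega Q (phi *v w) (phi *v w)
     = c * (omega Q v v + 2 * omega Q v w + omega Q w w)"
    by (simp only: vec.add omega_square[OF sym])
  thus ?thesis using h by (simp add: algebra_simps)
qed



lemma span_full:
  assumes "vec.dim (S :: (complex^'r) set) = CARD('r)" shows "vec.span S = UNIV"
proof -
  have e: "vec.dim (UNIV :: (complex^'r) set) = CARD('r)" by (rule vec_dim_card)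
  have "vec.dim (UNIV :: (complex^'r) set) \<le> vec.dim (vec.span S)"
    by (simp only: vec.dim_span e assms order_refl)
  thus ?thesis using vec.subspace_dim_equal[of "vec.span S" UNIV] vec.subspace_span vec.subspace_UNIV
    by blast
qed

lemma refl_main:
  fixes Q :: "complex^'r^'r"
  assumes nf: "nondeg_form Q" and ev: "even CARD('r)" and W: "vec.subspace W" and nd: "ndg Q W"
    and dW: "vec.dim W + 1 = CARD('r)" and phi: "phi \<in> GO0 Q" and fx: "\<forall>w\<in>W. phi *v w = w"
  shows "phi = mat 1"
proof -
  have sym: "transpose Q = Q" using nf unfolding nondeg_form_def by auto
  have r2: "CARD('r) \<ge> 2" proof -
    have "0 < CARD('r)" by simp
    thus ?thesis using ev by presburger
  qed
  have Wne: "W \<noteq> {0}" using dW r2 sub_ne0[OF W] by simp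
  obtain w0 where w0: "w0 \<in> W" "omega Q w0 w0 \<noteq> 0" using exists_aniso[OF sym W nd Wne] by blast
  obtain c where c: "c \<noteq> 0" "\<forall>v. omega Q (phi *v v) (phi *v v) = c * omega Q v v"
    using phi unfolding GO0_def GO_def by blast
  have "omega Q w0 w0 = c * omega Q w0 w0" using c(2) fx w0(1) by metis
  hence c1: "c = 1" using w0(2) by simp
  have pol: "omega Q (phi *v v) (phi *v w) = omega Q v w" for v w using polar[OF sym c(2)] c1 by simp
  have WU: "W \<noteq> UNIV" using dW vec_dim_card by (metis Suc_eq_plus1 n_not_Suc_n)
  then obtain a where a: "a \<notin> W" by blast
  obtain p where p: "p \<in> W" "\<forall>w\<in>W. omega Q (a - p) w = 0" using proj[OF sym W nd] by blast
  define u where "u = a - p"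
  have uW: "u \<notin> W" unfolding u_def using a p(1) W
    by (metis diff_add_cancel vec.subspace_add)
  have uo: "\<forall>w\<in>W. omega Q u w = 0" using p(2) unfolding u_def by blast
  have spW: "vec.span W = W" using W vec.span_eq_iff by blast
  have "vec.dim (insert u W) = CARD('r)" using vec.dim_insert[of u W] uW spW dW by simp
  hence spU: "vec.span (insert u W) = UNIV" by (rule span_full)
  have dec: "\<exists>t w. w \<in> W \<and> z = t *s u + w" for z
  proof -
    have "z \<in> vec.span (insert u W)" using spU by simp
    then obtain t where "z - t *s u \<in> W" using vec.span_breakdown_eq spW by metis
    thus ?thesis by (intro exI[of _ t] exI[of _ "z - t *s u"]) simp
  qed
  have uu: "omega Q u u \<noteq> 0"
  proof
    assume u0: "omega Q u u = 0"
    have "\<forall>z\<in>UNIV. omega Q u z = 0"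
    proof
      fix z :: "complex^'r" obtain t w where "w \<in> W" "z = t *s u + w" using dec by blast
      thus "omega Q u z = 0" using u0 uo by (simp add: omega_simps)
    qed
    hence "u = 0" using univ_ndg[OF nf] unfolding ndg_def by blast
    thus False using uW W vec.subspace_0 by blast
  qed
  obtain t w where tw: "w \<in> W" "phi *v u = t *s u + w" using dec by blast
  have "\<forall>w'\<in>W. omega Q w w' = 0"
  proof
    fix w' assume w': "w' \<in> W"
    have "omega Q (phi *v u) w' = omega Q (phi *v u) (phi *v w')" using fx w' by simp
    also have "\<dots> = 0" using pol uo w' by simp
    finally show "omega Q w w' = 0" using tw(2) uo w' by (simp add: omega_simps)
  qed
  hence "w = 0" using nd tw(1) unfolding ndg_def by blast
  hence pu: "phi *v u = t *s u" using tw by simp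
  have "omega Q u u = t * t * omega Q u u" using pol[of u u] pu by (simp add: omega_simps)
  hence "t * t = 1" using uu by simp
  hence "t = 1 \<or> t = -1" using square_eq_1_iff by blast
  thus ?thesis
  proof
    assume t1: "t = 1"
    show ?thesis unfolding matrix_eq
    proof
      fix z :: "complex^'r" obtain s w where "w \<in> W" "z = s *s u + w" using dec by blast
      thus "phi *v z = mat 1 *v z" using fx pu t1 by (simp add: vec.add vec.scale)
    qed
  next
    assume tm: "t = -1"
    define s where "s = csqrt (- omega Q w0 w0 / omega Q u u)"
    have s2: "s * s = - omega Q w0 w0 / omega Q u u" unfolding s_def by (metis power2_csqrt power2_eq_square)
    have sne: "s \<noteq> 0" using s2 w0(2) uu by auto
    have w0u: "omega Q w0 u = 0" using uo w0(1) omega_sym[OF sym] by metis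
    define x where "x = w0 + s *s u"
    have "omega Q x x = omega Q w0 w0 + s * s * omega Q u u"
      unfolding x_def using w0u omega_sym[OF sym, of u w0] by (simp add: omega_simps algebra_simps)
    also have "\<dots> = 0" using s2 uu by simp
    finally have xx: "omega Q x x = 0" .
    have xu: "omega Q x u = s * omega Q u u" unfolding x_def using w0u by (simp add: omega_simps)
    hence xu0: "omega Q x u \<noteq> 0" using sne uu by simp
    obtain U2 where U2: "vec.subspace U2" "ndg Q U2" "\<forall>z\<in>U2. omega Q z u = 0 \<and> omega Q z x = 0"
      "vec.dim U2 + 2 = vec.dim (UNIV :: (complex^'r) set)"
      using hyp_step[OF sym vec.subspace_UNIV univ_ndg[OF nf] _ uu _ xx xu0] by blast
    obtain L' where L': "vec.subspace L'" "L' \<subseteq> U2" "iso Q L'"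
       "2 * vec.dim L' = vec.dim U2 \<or> 2 * vec.dim L' + 1 = vec.dim U2"
      using iso_half[OF sym U2(1) U2(2)] by blast
    have dU2: "vec.dim U2 + 2 = CARD('r)" using U2(4) vec_dim_card by simp
    have dL': "2 * vec.dim L' + 2 = CARD('r)" using L'(4) dU2 ev by presburger
    have xn: "x \<notin> L'" using L'(2) U2(3) xu0 by blast
    have lx: "\<forall>l\<in>L'. omega Q l x = 0" using L'(2) U2(3) by blast
    define L where "L = vec.span (insert x L')"
    note e = extend[OF sym L'(1) L'(3) lx xx xn, folded L_def]
    have mL: "max_isotropic Q L" unfolding max_isotropic_def using e dL' unfolding iso_def by auto
    hence sc: "same_component L ((\<lambda>v. phi *v v) ` L)" using phi unfolding GO0_def by blast
    have L'W: "l \<in> W" if "l \<in> L'" for l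
    proof -
      obtain t' w' where tw': "w' \<in> W" "l = t' *s u + w'" using dec by blast
      have "omega Q l u = 0" using that L'(2) U2(3) by blast
      hence "t' * omega Q u u = 0" using tw' uo omega_sym[OF sym] by (simp add: omega_simps)
      hence "t' = 0" using uu by simp
      thus ?thesis using tw' by simp
    qed
    have spL': "vec.span L' = L'" using L'(1) vec.span_eq_iff by blast
    have L'L: "L' \<subseteq> L" unfolding L_def by (meson subset_insertI vec.span_superset subset_trans)
    have xL: "x \<in> L" unfolding L_def by (simp add: vec.span_base)
    have px1: "phi *v x = w0 - s *s u" unfolding x_def using fx w0(1) pu tm
      by (simp add: vec.add vec.scale)
    have px2: "x - (2 * s) *s u = w0 - s *s u" unfolding x_def by (simp add: vec_eq_iff algebra_simps)
    have px: "phi *v x = x - (2 * s) *s u" using px1 px2 by simp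
    have inter: "L \<inter> (\<lambda>v. phi *v v) ` L = L'"
    proof
      show "L' \<subseteq> L \<inter> (\<lambda>v. phi *v v) ` L"
      proof
        fix l assume l: "l \<in> L'"
        have "phi *v l = l" using fx L'W[OF l] by simp
        thus "l \<in> L \<inter> (\<lambda>v. phi *v v) ` L" using l L'L by (metis IntI image_eqI subsetD)
      qed
      show "L \<inter> (\<lambda>v. phi *v v) ` L \<subseteq> L'"
      proof
        fix z assume "z \<in> L \<inter> (\<lambda>v. phi *v v) ` L"
        then obtain y where z: "z \<in> L" and y: "y \<in> L" and zy: "z = phi *v y" by blast
        obtain k where k: "y - k *s x \<in> L'" using y unfolding L_def by (metis vec.span_breakdown_eq spL')
        define l where "l = y - k *s x"
        have yl: "y = l + k *s x" unfolding l_def by simp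
        have pl: "phi *v l = l" using fx L'W k unfolding l_def by simp
        have "phi *v y = phi *v l + k *s (phi *v x)" unfolding yl by (simp only: vec.add vec.scale)
        hence py: "phi *v y = l + k *s (x - (2 * s) *s u)" using pl px by simp
        have z1: "z = l + k *s (x - (2 * s) *s u)" using zy py by simp
        have "l + k *s (x - (2 * s) *s u) = y - (2 * s * k) *s u" unfolding yl
          by (simp add: vec_eq_iff algebra_simps)
        hence zz: "z = y - (2 * s * k) *s u" using z1 by simp
        have "(2 * s * k) *s u = y - z" using zz by simp
        hence inL: "(2 * s * k) *s u \<in> L" using y z e(1) vec.subspace_diff by metis
        hence "omega Q ((2 * s * k) *s u) ((2 * s * k) *s u) = 0" using e(2) unfolding iso_def by blast
        hence "(2 * s * k) * (2 * s * k) * omega Q u u = 0" by (simp add: omega_simps algebra_simps)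
        hence "k = 0" using uu sne by simp
        hence "z = l" using zz yl by simp
        thus "z \<in> L'" using k unfolding l_def by simp
      qed
    qed
    have "even (vec.dim L' + CARD('r) div 2)" using sc inter unfolding same_component_def by simp
    hence False using dL' by presburger
    thus ?thesis ..
  qed
qed



definition scm :: "complex \<Rightarrow> complex^'m^'n \<Rightarrow> complex^'m^'n" where
  "scm c X = (\<chi> i j. c * X$i$j)"

lemma scm_left: "A ** scm c B = scm c (A ** B)"
  by (simp add: scm_def matrix_matrix_mult_def vec_eq_iff sum_distrib_left mult.left_commute)
lemma scm_right: "scm c B ** A = scm c (B ** A)"
  by (simp add: scm_def matrix_matrix_mult_def vec_eq_iff sum_distrib_left mult.assoc)

lemma col_mult: "column i (A ** B) = A *v column i B"
  by (simp add: vec_eq_iff column_def matrix_matrix_mult_def matrix_vector_mult_def)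

lemma Q_entry: "Q$i$j = omega Q (axis i 1) (axis j 1)"
proof -
  have "Q$i$j = (transpose (mat 1) ** Q ** mat 1)$i$j" by (simp add: transpose_mat)
  also have "\<dots> = omega Q (column i (mat 1)) (column j (mat 1))" by (rule omega_gram)
  finally show ?thesis by (metis col_axis matrix_vector_mul_lid)
qed

lemma GO_gram:
  assumes sym: "transpose Q = Q" and h: "\<forall>v. omega Q (phi *v v) (phi *v v) = c * omega Q v v"
  shows "transpose phi ** Q ** phi = scm c Q"
proof -
  have "(transpose phi ** Q ** phi)$i$j = c * Q$i$j" for i j
    unfolding omega_gram Q_entry[of Q i j] col_axis[symmetric] by (rule polar[OF sym h])
  thus ?thesis by (simp add: vec_eq_iff scm_def)
qed

lemma rank_scm: assumes "c \<noteq> 0" shows "rank (scm c G) = rank G"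
proof -
  have r: "rows (scm c G) = (\<lambda>v. c *s v) ` rows G"
    by (auto simp: rows_def row_def scm_def vec_eq_iff)
  have "vec.span ((\<lambda>v. c *s v) ` rows G) = vec.span (rows G)"
  proof
    show "vec.span ((\<lambda>v. c *s v) ` rows G) \<subseteq> vec.span (rows G)"
      by (intro vec.span_minimal) (auto intro: vec.span_scale vec.span_base)
    show "vec.span (rows G) \<subseteq> vec.span ((\<lambda>v. c *s v) ` rows G)"
    proof (intro vec.span_minimal)
      show "rows G \<subseteq> vec.span ((\<lambda>v. c *s v) ` rows G)"
      proof
        fix v assume "v \<in> rows G"
        hence "(1/c) *s (c *s v) \<in> vec.span ((\<lambda>v. c *s v) ` rows G)"
          by (intro vec.span_scale vec.span_base) auto
        thus "v \<in> vec.span ((\<lambda>v. c *s v) ` rows G)" using assms by (simp add: vec.scale_scale)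
      qed
    qed simp
  qed
  thus ?thesis unfolding row_rank_def_gen r by (metis vec.dim_span)
qed

lemma Phi_entry:
  assumes sym: "transpose Q = Q"
  shows "((transpose F ** Q) *v z)$j = omega Q z (column j F)"
proof -
  have q: "Q$i$k = Q$k$i" for i k using sym by (metis transpose_def vec_lambda_beta)
  have "((transpose F ** Q) *v z)$j = (\<Sum>k\<in>UNIV. (\<Sum>l\<in>UNIV. F$l$j * Q$l$k) * z$k)"
    by (simp add: matrix_vector_mult_def matrix_matrix_mult_def transpose_def)
  also have "\<dots> = (\<Sum>k\<in>UNIV. \<Sum>l\<in>UNIV. z$k * Q$k$l * F$l$j)"
    by (simp add: sum_distrib_right q mult.commute mult.left_commute, simp add: sum_distrib_left)
  finally show ?thesis unfolding omega_expand by (simp add: column_def)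
qed



lemma part1:
  fixes Q :: "complex^'r^'r" and F :: "complex^'n^'r"
  assumes sym: "transpose Q = Q" and phi: "phi \<in> GO Q"
  shows "\<exists>c. c \<noteq> 0 \<and> tau Q (phi ** F) = scm c (tau Q F)"
proof -
  obtain c where c: "c \<noteq> 0" "\<forall>v. omega Q (phi *v v) (phi *v v) = c * omega Q v v"
    using phi unfolding GO_def by blast
  have "tau Q (phi ** F) = transpose F ** (transpose phi ** Q ** phi) ** F"
    unfolding tau_def by (simp add: matrix_transpose_mul matrix_mul_assoc)
  also have "\<dots> = scm c (tau Q F)"
    by (simp only: GO_gram[OF sym c(2)] scm_left scm_right tau_def matrix_mul_assoc)
  finally show ?thesis using c(1) by blast
qed

lemma scm_sym: assumes "transpose G = G" shows "transpose (scm c G) = scm c G"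
proof -
  have "G$i$j = G$j$i" for i j using assms by (metis transpose_def vec_lambda_beta)
  thus ?thesis by (simp add: scm_def transpose_def vec_eq_iff)
qed

lemma part2:
  fixes Q :: "complex^'r^'r" and F :: "complex^'n^'r"
  assumes nf: "nondeg_form Q" and ev: "even CARD('r)" and phi: "phi \<in> GO0 Q"
    and rk: "rank (tau Q F) + 1 \<ge> CARD('r)" and pf: "phi ** F = F"
  shows "phi = mat 1"
proof -
  have sym: "transpose Q = Q" using nf unfolding nondeg_form_def by auto
  define cols where "cols = columns F"
  define W where "W = vec.span cols"
  define Phi where "Phi = (\<lambda>z. (transpose F ** Q) *v z)"
  have fixc: "phi *v v = v" if "v \<in> cols" for v
    using that pf col_mult[of _ phi F] unfolding cols_def columns_def by auto
  have fixW: "\<forall>w\<in>W. phi *v w = w"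
  proof -
    have "vec.subspace {w. phi *v w = w}"
      by (auto simp: vec.subspace_def vec.add vec.scale)
    hence "W \<subseteq> {w. phi *v w = w}" unfolding W_def using fixc by (intro vec.span_minimal) auto
    thus ?thesis by blast
  qed
  have ri: "row i (tau Q F) = Phi (column i F)" for i
    by (simp add: Phi_def row_def vec_eq_iff Phi_entry[OF sym] tau_def omega_gram)
  have rowsG: "rows (tau Q F) = Phi ` cols"
    unfolding rows_def cols_def columns_def ri by auto
  obtain Bs where Bs: "Bs \<subseteq> cols" "vec.independent Bs" "cols \<subseteq> vec.span Bs" "card Bs = vec.dim cols"
    using vec.basis_exists[of cols] by blast
  have fB: "finite Bs" using Bs(2) vec.finiteI_independent by blast
  have spB: "vec.span Bs = W" unfolding W_def using Bs(1,3)
    by (metis vec.span_mono vec.span_span subset_antisym)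
  have dW: "vec.dim W = card Bs" using spB Bs(2) vec.dim_span_eq_card_independent by metis
  have "rank (tau Q F) = vec.dim (vec.span (Phi ` cols))" unfolding row_rank_def_gen rowsG by simp
  also have "\<dots> = vec.dim (Phi ` vec.span cols)" unfolding Phi_def by (simp add: vec.span_image)
  also have "\<dots> = vec.dim (Phi ` vec.span Bs)" unfolding spB W_def ..
  also have "\<dots> = vec.dim (Phi ` Bs)" unfolding Phi_def by (metis vec.span_image vec.dim_span)
  finally have rkB: "rank (tau Q F) = vec.dim (Phi ` Bs)" .
  have dle: "vec.dim (Phi ` Bs) \<le> card (Phi ` Bs)"
    using fB by (intro vec.dim_le_card) (auto intro: vec.span_base)
  have cle: "card (Phi ` Bs) \<le> card Bs" using fB card_image_le by blast
  have Bsle: "card Bs \<le> CARD('r)"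
    using vec.independent_card_le_dim[OF subset_UNIV Bs(2)] vec_dim_card by metis
  show ?thesis
  proof (cases "card Bs = CARD('r)")
    case True
    hence "vec.span Bs = UNIV" using span_full Bs(2) vec.dim_eq_card_independent by metis
    hence "\<forall>w. phi *v w = w" using fixW spB by auto
    thus ?thesis unfolding matrix_eq by simp
  next
    case False
    hence cB: "card Bs + 1 = CARD('r)" using rk rkB dle cle Bsle by linarith
    have c1: "card (Phi ` Bs) = card Bs" using rk rkB dle cle cB by linarith
    have c2: "card (Phi ` Bs) = vec.dim (Phi ` Bs)" using rk rkB dle cle cB by linarith
    have inj1: "inj_on Phi Bs" using eq_card_imp_inj_on[OF fB c1] .
    have ind: "vec.independent (Phi ` Bs)"
      using vec.card_eq_dim[of "Phi ` Bs" "Phi ` Bs"] c2 fB vec.span_superset by blast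
    have inj: "inj_on Phi W" unfolding spB[symmetric] Phi_def
      using vec.inj_on_span_independent_image ind inj1 unfolding Phi_def by blast
    have nd: "ndg Q W" unfolding ndg_def
    proof (intro ballI impI)
      fix z assume z: "z \<in> W" and h: "\<forall>w\<in>W. omega Q z w = 0"
      have "Phi z = 0"
      proof -
        have "column j F \<in> W" for j unfolding W_def cols_def columns_def
          by (rule vec.span_base) auto
        thus ?thesis using h by (simp add: vec_eq_iff Phi_def Phi_entry[OF sym])
      qed
      moreover have "Phi 0 = 0" unfolding Phi_def by simp
      moreover have "0 \<in> W" unfolding W_def by (rule vec.span_zero)
      ultimately show "z = 0" using inj z unfolding inj_on_def by metis
    qed
    show ?thesis
      using refl_main[OF nf ev _ nd _ phi fixW] W_def vec.subspace_span dW cB by simp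
  qed
qed


theorem lemma2p6:
  fixes Q :: "complex^'r^'r"
  assumes "nondeg_form Q"
    and "even CARD('r)"
    and "CARD('r) \<le> CARD('n)"
  shows "(\<forall>phi\<in>GO0 Q. \<forall>F :: complex^'n^'r.
            tau Q F \<in> CZ CARD('r) \<union> CZ (CARD('r) - 1) \<longrightarrow>
            tau Q (phi ** F) \<in> CZ CARD('r) \<union> CZ (CARD('r) - 1))
      \<and> (\<forall>phi\<in>GO0 Q. \<forall>F :: complex^'n^'r.
            tau Q F \<in> CZ CARD('r) \<union> CZ (CARD('r) - 1) \<longrightarrow>
            phi ** F = F \<longrightarrow> phi = mat 1)"
proof (intro conjI ballI allI impI)
  have sym: "transpose Q = Q" using assms(1) unfolding nondeg_form_def by auto
  fix phi and F :: "complex^'n^'r"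
  assume phi: "phi \<in> GO0 Q" and h: "tau Q F \<in> CZ CARD('r) \<union> CZ (CARD('r) - 1)"
  {
    have "phi \<in> GO Q" using phi unfolding GO0_def by blast
    then obtain c where c: "c \<noteq> 0" "tau Q (phi ** F) = scm c (tau Q F)" using part1[OF sym] by blast
    show "tau Q (phi ** F) \<in> CZ CARD('r) \<union> CZ (CARD('r) - 1)"
      using h unfolding c(2) CZ_def by (auto simp: scm_sym rank_scm[OF c(1)])
  }
  {
    assume pf: "phi ** F = F"
    have rk: "rank (tau Q F) + 1 \<ge> CARD('r)" using h unfolding CZ_def by auto
    show "phi = mat 1" by (rule part2[OF assms(1) assms(2) phi rk pf])
  }
qed

end
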